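(* Let $a>0$ and let $\phi$ be a random variable on $[0,2\pi]$ with density $f_\Phi(\phi)=\frac{\exp(-a\cos\phi)}{2\pi I_0(a)}$. Then $$\mathbb{E}\!\left[\exp(a e^{i\phi})\right]=\frac{J_0(a)}{I_0(a)},\qquad \mathbb{E}\!\left[\left|\exp(a e^{i\phi})\right|^2\right]=1.$$ In particular, if $a$ is a positive zero of $J_0$, then $\mathbb{E}[\exp(a e^{i\phi})]=0$ and $\mathbb{E}[|\exp(a e^{i\phi})|^2]=1$.
   Context: $J_0$ is the Bessel function of the first kind of order $0$ and $I_0$ is the modified Bessel function of the first kind of order $0$. *)

theory Defs
  imports "HOL-Probability.Probability"
begin

definition bessel_J0 :: "real \<Rightarrow> real" where
  "bessel_J0 x = (\<Sum>k. (-1) ^ k * (x / 2) ^ (2 * k) / (fact k) ^ 2)"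

definition bessel_I0 :: "real \<Rightarrow> real" where
  "bessel_I0 x = (\<Sum>k. (x / 2) ^ (2 * k) / (fact k) ^ 2)"

end

theory Submission imports Defs begin

lemma alg1: fixes c s p m :: real assumes "c * c + s * s = 1"
  shows "p + m*p = c*(c*p) + (s * (s * p) + (m*(c*(c*p)) + m*(s * (s * p))))"
  using assms by algebra

lemma dcos: "((\<lambda>x. cos x^(n+1) * sin x) has_real_derivative
   (real (n+2) * cos x^(n+2) - real (n+1) * cos x^n)) (at x)"
proof -
  have "((\<lambda>x. cos x^(n+1) * sin x) has_real_derivative
     (real (n+1) * cos x ^ n * (- sin x) * sin x + cos x^(n+1) * cos x)) (at x)"
    using DERIV_mult[OF DERIV_power_Suc[OF DERIV_cos[of x], where n=n] DERIV_sin[of x]]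
    by (simp add: algebra_simps)
  moreover have "real (n+1) * cos x ^ n * (- sin x) * sin x + cos x^(n+1) * cos x
     = real (n+2) * cos x^(n+2) - real (n+1) * cos x^n"
    apply (simp add: power2_eq_square algebra_simps) apply (rule alg1)
    using sin_cos_squared_add[of x] by (simp add: power2_eq_square)
  ultimately show ?thesis by simp
qed

lemma dsin: "((\<lambda>x. - (sin x^(n+1) * cos x)) has_real_derivative
   (real (n+2) * sin x^(n+2) - real (n+1) * sin x^n)) (at x)"
proof -
  have "((\<lambda>x. - (sin x^(n+1) * cos x)) has_real_derivative
     - (real (n+1) * sin x ^ n * cos x * cos x + sin x^(n+1) * (- sin x))) (at x)"
    using DERIV_minus[OF DERIV_mult[OF DERIV_power_Suc[OF DERIV_sin[of x], where n=n] DERIV_cos[of x]]]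
    by (simp add: algebra_simps)
  moreover have "- (real (n+1) * sin x ^ n * cos x * cos x + sin x^(n+1) * (- sin x))
     = real (n+2) * sin x^(n+2) - real (n+1) * sin x^n"
    apply (simp add: power2_eq_square algebra_simps) apply (rule alg1)
    using sin_cos_squared_add[of x] by (simp add: power2_eq_square)
  ultimately show ?thesis by simp
qed

lemma ftc0:
  assumes "\<And>x. (F has_real_derivative f x) (at x)" "F (2*pi) = F 0"
  shows "(f has_integral 0) {0..2*pi}"
proof -
  have "(f has_integral F (2*pi) - F 0) {0..2*pi}"
    by (rule fundamental_theorem_of_calculus) (auto simp: has_real_derivative_iff_has_vector_derivative[symmetric] intro: has_field_derivative_at_within assms)
  with assms show ?thesis by simp
qed

definition wal :: "nat \<Rightarrow> real" where
  "wal n = (if even n then 2*pi*fact n / (4^(n div 2) * fact (n div 2)^2) else 0)"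

lemma wal_alg:
  fixes A B P k :: real assumes "B > 0" "P > 0" "k \<ge> 0"
  shows "(2*k+2) * (2*pi*((2*k+2)*(2*k+1)*A)/(4*P*((k+1)*B)^2)) = (2*k+1) * (2*pi*A/(P*B^2))"
proof -
  have h: "(2*k+2) * ((2*k+2)*(2*k+1)*A) * (P*B^2) = (2*k+1) * A * (4*P*((k+1)*B)^2)"
    by (simp add: power2_eq_square algebra_simps)
  have "4*P*((k+1)*B)^2 \<noteq> 0" using assms by simp
  then show ?thesis using assms apply (simp add: field_simps) by (simp add: power2_eq_square algebra_simps)
qed

lemma wal_rec: "real (n+2) * wal (n+2) = real (n+1) * wal n"
proof (cases "even n")
  case True
  then obtain k where n: "n = 2*k" by blast
  have f1: "fact (2*k+2) = (real (2*k+2)) * (real (2*k+1)) * (fact (2*k) :: real)"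
    by (simp add: fact_Suc algebra_simps)
  have f2: "fact (k+1) = real (k+1) * (fact k :: real)" by (simp add: algebra_simps)
  have d: "(2*k+2) div 2 = k+1" by simp
  have "wal (n+2) = 2*pi*((2*real k+2)*(2*real k+1)*fact (2*k))/(4*4^k*((real k+1)*fact k)^2)"
    unfolding wal_def n using f1 f2 d by (simp add: algebra_simps)
  moreover have "wal n = 2*pi*fact (2*k)/(4^k * fact k ^2)"
    unfolding wal_def n by simp
  ultimately show ?thesis using wal_alg[of "fact k" "4^k" "real k" "fact (2*k)"] n
    by (simp add: ac_simps)
next
  case False then show ?thesis by (simp add: wal_def)
qed

lemma mom:
  fixes c :: "real \<Rightarrow> real"
  assumes cont: "continuous_on UNIV c"
    and m0: "((\<lambda>x. c x ^ 0) has_integral 2*pi) {0..2*pi}"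
    and m1: "((\<lambda>x. c x ^ 1) has_integral 0) {0..2*pi}"
    and rec: "\<And>n. ((\<lambda>x. real (n+2) * c x^(n+2) - real (n+1) * c x^n) has_integral 0) {0..2*pi}"
  shows "((\<lambda>x. c x ^ n) has_integral wal n) {0..2*pi}"
proof -
  have "((\<lambda>x. c x ^ n) has_integral wal n) {0..2*pi} \<and> ((\<lambda>x. c x ^ Suc n) has_integral wal (Suc n)) {0..2*pi}"
  proof (induction n)
    case 0 then show ?case using m0 m1 by (simp add: wal_def)
  next
    case (Suc n)
    have ci: "(\<lambda>x. c x ^ (n+2)) integrable_on {0..2*pi}"
      by (intro integrable_continuous_real continuous_intros continuous_on_subset[OF cont]) auto
    then have "((\<lambda>x. real (n+2) * c x^(n+2) - real (n+1) * c x^n) has_integral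
        real (n+2) * integral {0..2*pi} (\<lambda>x. c x ^ (n+2)) - real (n+1) * wal n) {0..2*pi}"
      using Suc.IH by (intro has_integral_diff has_integral_mult_right integrable_integral) auto
    from has_integral_unique[OF this rec[of n]]
    have "real (n+2) * integral {0..2*pi} (\<lambda>x. c x ^ (n+2)) = real (n+2) * wal (n+2)"
      using wal_rec[of n] by simp
    then have "integral {0..2*pi} (\<lambda>x. c x ^ (n+2)) = wal (n+2)"
      by (subst (asm) mult_left_cancel) auto
    then have "((\<lambda>x. c x ^ (n+2)) has_integral wal (n+2)) {0..2*pi}"
      using ci by (metis integrable_integral)
    then show ?case using Suc.IH by (simp add: add.commute)
  qed
  then show ?thesis by blast
qed

lemma mom_cos: "((\<lambda>x. cos x ^ n) has_integral wal n) {0..2*pi}"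
proof (rule mom)
  show "((\<lambda>x. real (n+2) * cos x^(n+2) - real (n+1) * cos x^n) has_integral 0) {0..2*pi}" for n
    by (rule ftc0[OF dcos]) simp
  show "((\<lambda>x. cos x ^ 1) has_integral 0) {0..2*pi}"
    using ftc0[of sin cos] by (auto intro!: derivative_eq_intros)
  show "((\<lambda>x. cos x ^ 0) has_integral 2*pi) {0..2*pi}"
    using has_integral_const_real[of "1::real" 0 "2*pi"] by (simp add: field_simps)
qed (intro continuous_intros)

lemma mom_sin: "((\<lambda>x. sin x ^ n) has_integral wal n) {0..2*pi}"
proof (rule mom)
  show "((\<lambda>x. real (n+2) * sin x^(n+2) - real (n+1) * sin x^n) has_integral 0) {0..2*pi}" for n
    by (rule ftc0[OF dsin]) simp
  show "((\<lambda>x. sin x ^ 1) has_integral 0) {0..2*pi}"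
    by (rule ftc0[where F="\<lambda>x. - cos x"]) (auto intro!: derivative_eq_intros)
  show "((\<lambda>x. sin x ^ 0) has_integral 2*pi) {0..2*pi}"
    using has_integral_const_real[of "1::real" 0 "2*pi"] by (simp add: field_simps)
qed (intro continuous_intros)

lemma series_int:
  fixes z :: "'a::{real_normed_field,banach}" and c :: "real \<Rightarrow> real"
  assumes cont: "continuous_on UNIV c" and bnd: "\<And>x. \<bar>c x\<bar> \<le> 1"
    and mom: "\<And>n. ((\<lambda>x. c x ^ n) has_integral wal n) {0..2*pi}"
  shows "(\<lambda>n. z^n /\<^sub>R fact n * of_real (wal n)) sums integral {0..2*pi} (\<lambda>x. exp (z * of_real (c x)))"
proof -
  define f where "f n x = (z^n /\<^sub>R fact n) * of_real (c x ^ n)" for n x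
  have ul: "uniform_limit {0..2*pi} (\<lambda>n x. \<Sum>i<n. f i x) (\<lambda>x. suminf (\<lambda>i. f i x)) sequentially"
  proof (rule Weierstrass_m_test)
    show "norm (f n x) \<le> norm z ^ n / fact n" for n x
    proof -
      have "norm (f n x) = norm z ^ n / fact n * \<bar>c x\<bar> ^ n"
        by (simp add: f_def norm_mult norm_power power_abs divide_inverse mult.commute)
      also have "\<dots> \<le> norm z ^ n / fact n * 1"
        by (intro mult_left_mono power_le_one) (auto simp: bnd)
      finally show ?thesis by simp
    qed
    show "summable (\<lambda>n. norm z ^ n / fact n)"
      using summable_exp_generic[of "norm z"] by (simp add: divide_inverse mult.commute)
  qed
  have e: "suminf (\<lambda>i. f i x) = exp (z * of_real (c x))" for x
  proof -
    have "(\<lambda>i. f i x) = (\<lambda>i. (z * of_real (c x))^i /\<^sub>R fact i)"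
      by (auto simp: f_def power_mult_distrib)
    then show ?thesis using exp_converges[of "z * of_real (c x)"] sums_unique by metis
  qed
  have contf: "continuous_on {0..2*pi} (\<lambda>x. \<Sum>i<n. f i x)" for n
    unfolding f_def by (intro continuous_intros continuous_on_subset[OF cont]) auto
  obtain I J where I: "\<And>n. ((\<lambda>x. \<Sum>i<n. f i x) has_integral I n) {0..2*pi}"
     and J: "((\<lambda>x. exp (z * of_real (c x))) has_integral J) {0..2*pi}" and lim: "I \<longlonglongrightarrow> J"
    using uniform_limit_integral[OF ul[unfolded e] contf] by auto
  have In: "I n = (\<Sum>i<n. z^i /\<^sub>R fact i * of_real (wal i))" for n
  proof -
    have "((\<lambda>x. \<Sum>i<n. f i x) has_integral (\<Sum>i<n. z^i /\<^sub>R fact i * of_real (wal i))) {0..2*pi}"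
      unfolding f_def
      by (intro has_integral_sum has_integral_mult_right has_integral_of_real mom) auto
    then show ?thesis using I has_integral_unique by blast
  qed
  have "J = integral {0..2*pi} (\<lambda>x. exp (z * of_real (c x)))" using J by (simp add: integral_unique)
  moreover have "I = (\<lambda>n. \<Sum>i<n. z^i /\<^sub>R fact i * of_real (wal i))" using In by auto
  ultimately show ?thesis using lim unfolding sums_def by simp
qed

lemma series_int2:
  fixes z :: "'a::{real_normed_field,banach}" and c :: "real \<Rightarrow> real"
  assumes cont: "continuous_on UNIV c" and bnd: "\<And>x. \<bar>c x\<bar> \<le> 1"
    and mom: "\<And>n. ((\<lambda>x. c x ^ n) has_integral wal n) {0..2*pi}"
  shows "(\<lambda>k. of_real (2*pi / (4^k * fact k ^ 2)) * z^(2*k)) sums integral {0..2*pi} (\<lambda>x. exp (z * of_real (c x)))"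
proof -
  let ?g = "\<lambda>n. z^n /\<^sub>R fact n * of_real (wal n)"
  have "(\<lambda>k. ?g (2*k)) sums integral {0..2*pi} (\<lambda>x. exp (z * of_real (c x)))"
  proof (subst sums_mono_reindex)
    show "strict_mono (\<lambda>k::nat. 2*k)" by (auto simp: strict_mono_def)
    show "?g n = 0" if "n \<notin> range (\<lambda>k::nat. 2*k)" for n
    proof -
      have "odd n" using that by (metis evenE rangeI)
      then show ?thesis by (simp add: wal_def)
    qed
  qed (rule series_int[OF assms])
  moreover have "?g (2*k) = of_real (2*pi / (4^k * fact k ^ 2)) * z^(2*k)" for k
  proof -
    have "?g (2*k) = z^(2*k) * of_real (wal (2*k) / fact (2*k))"
      by (simp add: scaleR_conv_of_real divide_inverse ac_simps)
    also have "wal (2*k) / fact (2*k) = 2*pi / (4^k * fact k ^ 2)"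
      by (simp add: wal_def)
    finally show ?thesis by (simp add: mult.commute)
  qed
  ultimately show ?thesis by simp
qed

lemma I0_int:
  fixes a :: real
  shows "(\<lambda>k. (a/2)^(2*k)/fact k^2) sums (integral {0..2*pi} (\<lambda>x. exp (a * cos x)) / (2*pi))"
proof -
  have "(\<lambda>k. (2*pi / (4^k * fact k ^ 2)) * a^(2*k)) sums integral {0..2*pi} (\<lambda>x. exp (a * cos x))"
    using series_int2[of cos a] mom_cos by (simp add: continuous_intros)
  moreover have "(2*pi / (4^k * fact k ^ 2)) * a^(2*k) / (2*pi) = (a/2)^(2*k)/fact k^2" for k
  proof -
    have "(a/2)^(2*k) = a^(2*k)/4^k" by (simp add: power_divide power_mult)
    then show ?thesis by simp
  qed
  ultimately show ?thesis using sums_divide[of _ _ "2*pi"] by fastforce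
qed

lemma J0_int:
  fixes a :: real
  defines "Jc \<equiv> integral {0..2*pi} (\<lambda>x. exp (\<i> * of_real a * of_real (sin x)))"
  shows "(\<lambda>k. (-1)^k*(a/2)^(2*k)/fact k^2) sums (Re Jc / (2*pi))" "Im Jc = 0"
proof -
  have "(\<lambda>k. of_real (2*pi / (4^k * fact k ^ 2)) * (\<i> * of_real a)^(2*k)) sums Jc"
    unfolding Jc_def using series_int2[of sin "\<i> * of_real a"] mom_sin by (simp add: continuous_intros)
  moreover have "of_real (2*pi / (4^k * fact k ^ 2)) * (\<i> * of_real a)^(2*k) =
     complex_of_real (2*pi*((-1)^k*(a/2)^(2*k)/fact k^2))" for k
  proof -
    have "(\<i> * of_real a)^(2*k) = complex_of_real ((-1)^k * a^(2*k))"
      by (simp add: power_mult power_mult_distrib power_minus[of "(complex_of_real a)\<^sup>2"])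
    moreover have "(a/2)^(2*k) = a^(2*k)/4^k" by (simp add: power_divide power_mult)
    ultimately show ?thesis by simp
  qed
  ultimately have s: "(\<lambda>k. complex_of_real (2*pi*((-1)^k*(a/2)^(2*k)/fact k^2))) sums Jc" by simp
  from bounded_linear.sums[OF bounded_linear_Re s]
  have "(\<lambda>k. 2*pi*((-1)^k*(a/2)^(2*k)/fact k^2)) sums Re Jc" by (simp only: Re_complex_of_real)
  from sums_divide[OF this, of "2*pi"]
  show "(\<lambda>k. (-1)^k*(a/2)^(2*k)/fact k^2) sums (Re Jc / (2*pi))" by simp
  from bounded_linear.sums[OF bounded_linear_Im s]
  have "(\<lambda>k. 0) sums Im Jc" by (simp only: Im_complex_of_real)
  then show "Im Jc = 0" using sums_zero sums_unique2 by blast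
qed

lemma bessel_facts:
  fixes a :: real
  shows "bessel_I0 a > 0"
    "integral {0..2*pi} (\<lambda>x. exp (a * cos x)) = 2*pi * bessel_I0 a"
    "integral {0..2*pi} (\<lambda>x. exp (\<i> * of_real a * of_real (sin x))) = complex_of_real (2*pi * bessel_J0 a)"
proof -
  have sI: "(\<lambda>k. (a/2)^(2*k)/fact k^2) sums (integral {0..2*pi} (\<lambda>x. exp (a * cos x)) / (2*pi))"
    by (rule I0_int)
  then have eqI: "bessel_I0 a = integral {0..2*pi} (\<lambda>x. exp (a * cos x)) / (2*pi)"
    unfolding bessel_I0_def by (rule sums_unique[symmetric])
  have "0 < (\<Sum>k. (a/2)^(2*k)/fact k^2)"
    by (rule suminf_pos2[of _ 0]) (use sI sums_summable in \<open>auto simp: power_mult\<close>)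
  then show "bessel_I0 a > 0" unfolding bessel_I0_def .
  show "integral {0..2*pi} (\<lambda>x. exp (a * cos x)) = 2*pi * bessel_I0 a" using eqI by simp
  define Jc where "Jc = integral {0..2*pi} (\<lambda>x. exp (\<i> * of_real a * of_real (sin x)))"
  have "bessel_J0 a = Re Jc / (2*pi)"
    unfolding bessel_J0_def Jc_def by (rule sums_unique[symmetric]) (rule J0_int(1))
  moreover have "Im Jc = 0" unfolding Jc_def by (rule J0_int(2))
  ultimately have "Jc = complex_of_real (2*pi * bessel_J0 a)" by (simp add: complex_eq_iff)
  then show "integral {0..2*pi} (\<lambda>x. exp (\<i> * of_real a * of_real (sin x))) = complex_of_real (2*pi * bessel_J0 a)"
    unfolding Jc_def .
qed

theorem mainTheorem13:
  fixes M :: "'w measure" and \<Phi> :: "'w \<Rightarrow> real" and a :: real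
  assumes "a > 0"
    and "prob_space M"
    and "distributed M lborel \<Phi>
           (\<lambda>\<phi>. ennreal (indicator {0..2*pi} \<phi> * exp (- a * cos \<phi>) / (2 * pi * bessel_I0 a)))"
  shows "(LINT \<omega>|M. exp (complex_of_real a * cis (\<Phi> \<omega>))) = complex_of_real (bessel_J0 a / bessel_I0 a)
    \<and> (LINT \<omega>|M. (cmod (exp (complex_of_real a * cis (\<Phi> \<omega>)))) ^ 2) = 1
    \<and> (bessel_J0 a = 0 \<longrightarrow>
         (LINT \<omega>|M. exp (complex_of_real a * cis (\<Phi> \<omega>))) = 0
       \<and> (LINT \<omega>|M. (cmod (exp (complex_of_real a * cis (\<Phi> \<omega>)))) ^ 2) = 1)"
proof -
  define D where "D \<phi> = indicator {0..2*pi} \<phi> * exp (- a * cos \<phi>) / (2 * pi * bessel_I0 a)" for \<phi>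
  have I0: "bessel_I0 a > 0" by (rule bessel_facts(1))
  have Dnn: "D x \<ge> 0" for x unfolding D_def using I0 by (auto simp: indicator_def)
  have dist: "distributed M lborel \<Phi> (\<lambda>x. ennreal (D x))" using assms(3) unfolding D_def .
  have Dm[measurable]: "D \<in> borel_measurable lborel" unfolding D_def by measurable
  have Phim[measurable]: "\<Phi> \<in> measurable M lborel" using distributed_measurable[OF dist] .
  have dd: "distr M lborel \<Phi> = density lborel (\<lambda>x. ennreal (D x))"
    using distributed_distr_eq_density[OF dist] .
  define C where "C = 1 / (2 * pi * bessel_I0 a)"
  have cis_eq: "complex_of_real a * cis x = complex_of_real (a * cos x) + \<i> * of_real a * of_real (sin x)" for x
    by (simp add: complex_eq_iff)
  have E1: "(LINT \<omega>|M. exp (complex_of_real a * cis (\<Phi> \<omega>))) = complex_of_real (bessel_J0 a / bessel_I0 a)"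
  proof -
    let ?g = "\<lambda>x. exp (complex_of_real a * cis x)"
    let ?h = "\<lambda>x. exp (\<i> * of_real a * of_real (sin x))"
    have gm: "?g \<in> borel_measurable borel" unfolding cis_eq by measurable
    have "(LINT \<omega>|M. ?g (\<Phi> \<omega>)) = integral\<^sup>L (distr M lborel \<Phi>) ?g"
      by (rule integral_distr[symmetric]) (use gm Phim in \<open>auto simp: measurable_lborel1 measurable_lborel2\<close>)
    also have "\<dots> = (LINT x|lborel. D x *\<^sub>R ?g x)"
      unfolding dd by (rule integral_density) (use gm Dnn in auto)
    also have "\<dots> = (LINT x|lborel. indicator {0..2*pi} x *\<^sub>R (of_real C * ?h x))"
    proof (rule Bochner_Integration.integral_cong[OF refl])
      fix x
      have "exp (complex_of_real a * cis x) = of_real (exp (a * cos x)) * ?h x"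
        by (simp add: cis_eq exp_add exp_of_real[symmetric] del: of_real_mult)
      moreover have "complex_of_real (exp (- (a * cos x))) * complex_of_real (exp (a * cos x)) = 1"
        by (simp add: exp_add[symmetric] flip: of_real_mult)
      ultimately show "D x *\<^sub>R ?g x = indicator {0..2*pi} x *\<^sub>R (of_real C * ?h x)"
        by (simp add: D_def C_def indicator_def scaleR_conv_of_real)
    qed
    also have "\<dots> = (LINT x:{0..2*pi}|lborel. of_real C * ?h x)"
      unfolding set_lebesgue_integral_def by (rule refl)
    also have "\<dots> = integral {0..2*pi} (\<lambda>x. of_real C * ?h x)"
      by (rule set_borel_integral_eq_integral(2), rule borel_integrable_atLeastAtMost')
         (intro continuous_intros)
    also have "\<dots> = of_real C * integral {0..2*pi} ?h"
    proof -
      have "?h integrable_on {0..2*pi}"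
        by (intro integrable_continuous_real continuous_intros)
      then show ?thesis by (intro integral_unique has_integral_mult_right integrable_integral)
    qed
    also have "\<dots> = complex_of_real (bessel_J0 a / bessel_I0 a)"
      using bessel_facts(3)[of a] I0 by (simp add: C_def)
    finally show ?thesis .
  qed
  have E2: "(LINT \<omega>|M. (cmod (exp (complex_of_real a * cis (\<Phi> \<omega>)))) ^ 2) = 1"
  proof -
    let ?g = "\<lambda>x. (cmod (exp (complex_of_real a * cis x))) ^ 2"
    have gm: "?g \<in> borel_measurable borel" unfolding cis_eq by measurable
    have "(LINT \<omega>|M. ?g (\<Phi> \<omega>)) = (LINT x|lborel. D x * ?g x)"
      by (rule distributed_integral[OF dist, symmetric]) (use gm Dnn in auto)
    also have "\<dots> = (LINT x|lborel. indicator {0..2*pi} x *\<^sub>R (C * exp (a * cos x)))"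
    proof (rule Bochner_Integration.integral_cong[OF refl])
      fix x
      have "?g x = exp (a * cos x) * exp (a * cos x)"
        by (simp add: power2_eq_square)
      moreover have "exp (- a * cos x) * (exp (a * cos x) * exp (a * cos x)) = exp (a * cos x)"
        by (simp add: exp_add[symmetric])
      ultimately show "D x * ?g x = indicator {0..2*pi} x *\<^sub>R (C * exp (a * cos x))"
        by (simp add: D_def C_def indicator_def)
    qed
    also have "\<dots> = (LINT x:{0..2*pi}|lborel. C * exp (a * cos x))"
      unfolding set_lebesgue_integral_def by (rule refl)
    also have "\<dots> = integral {0..2*pi} (\<lambda>x. C * exp (a * cos x))"
      by (rule set_borel_integral_eq_integral(2), rule borel_integrable_atLeastAtMost')
         (intro continuous_intros)
    also have "\<dots> = C * integral {0..2*pi} (\<lambda>x. exp (a * cos x))"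
    proof -
      have "(\<lambda>x. exp (a * cos x)) integrable_on {0..2*pi}"
        by (intro integrable_continuous_real continuous_intros)
      then show ?thesis by (intro integral_unique has_integral_mult_right integrable_integral)
    qed
    also have "\<dots> = 1"
      using bessel_facts(2)[of a] I0 by (simp add: C_def)
    finally show ?thesis .
  qed
  show ?thesis using E1 E2 by simp
qed

end
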